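(* Let $\mathfrak{B}\in\mathfrak{L}_{m,p}$ and let $Q_\Phi$ be a QDF. Then $\mathfrak{B}$ is dissipative with respect to $Q_\Phi$ if and only if there exists a symmetric positive semidefinite matrix $\Psi$ such that $Q_{\nabla\Psi}\le Q_\Phi$ on $\mathfrak{B}$.
   Context: Time axis $\mathbb{Z}_+$, $m,p\ge1$, $q=m+p$. $\mathfrak{L}_{m,p}$ is the set of behaviors $\mathfrak{B}=\{w=(u,y):\mathbb{Z}_+\to\mathbb{R}^{q}\mid\exists x:\mathbb{Z}_+\to\mathbb{R}^n,\ x(t+1)=Ax(t)+Bu(t),\ y(t)=Cx(t)+Du(t)\ \forall t\}$ for real matrices $A,B,C,D$. A QDF with coefficient matrix $\Psi\in\mathbb{S}^{(M+1)q}$ ($M\ge-1$, $M=-1$ giving the zero QDF) is $Q_\Psi(w)(t)=w_{[t,t+M]}^\top\Psi w_{[t,t+M]}$ with $w_{[t,t+M]}=\operatorname{col}(w(t),\dots,w(t+M))$. $\nabla\Psi:=\begin{bmatrix}0_{q,q}&0\\0&\Psi\end{bmatrix}-\begin{bmatrix}\Psi&0\\0&0_{q,q}\end{bmatrix}$, so $Q_{\nabla\Psi}(w)(t)=Q_\Psi(w)(t+1)-Q_\Psi(w)(t)$. "$Q_1\le Q_2$ on $\mathfrak{B}$" means $Q_1(w)(t)\le Q_2(w)(t)$ for all $w\in\mathfrak{B}$, $t\in\mathbb{Z}_+$. $\mathfrak{B}$ is dissipative with respect to $Q_\Phi$ if there exists a QDF $Q_\Psi$ with $Q_\Psi\ge0$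 on $\mathfrak{B}$ and $Q_{\nabla\Psi}\le Q_\Phi$ on $\mathfrak{B}$. *)

theory Defs
  imports "Jordan_Normal_Form.Matrix"
begin

text \<open>Signals are functions nat => real vec (time axis Z_+ = nat), with w t of dimension q = m + p,
  w t = col(u t, y t), u t = first m entries, y t = last p entries.
  A QDF is given by a natural number N = M + 1 (N = 0 is the zero QDF, M = -1) and a
  symmetric coefficient matrix Psi of size (N*q) x (N*q).\<close>

definition sym_mat :: "real mat \<Rightarrow> bool" where
  "sym_mat P \<longleftrightarrow> transpose_mat P = P"

definition psd_mat :: "real mat \<Rightarrow> bool" where
  "psd_mat P \<longleftrightarrow> (\<forall>v \<in> carrier_vec (dim_row P). 0 \<le> scalar_prod v (P *\<^sub>v v))"

definition iso_behavior ::
  "nat \<Rightarrow> nat \<Rightarrow> nat \<Rightarrow> real mat \<Rightarrow> real mat \<Rightarrow> real mat \<Rightarrow> real mat \<Rightarrow> (nat \<Rightarrow> real vec) set" where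
  "iso_behavior m p n A B C D =
     {w. (\<forall>t. w t \<in> carrier_vec (m + p)) \<and>
         (\<exists>x. \<forall>t. x t \<in> carrier_vec n \<and>
              x (Suc t) = A *\<^sub>v x t + B *\<^sub>v vec_first (w t) m \<and>
              vec_last (w t) p = C *\<^sub>v x t + D *\<^sub>v vec_first (w t) m)}"

definition L_mp :: "nat \<Rightarrow> nat \<Rightarrow> (nat \<Rightarrow> real vec) set set" where
  "L_mp m p = {Bh. \<exists>n A B C D. A \<in> carrier_mat n n \<and> B \<in> carrier_mat n m \<and>
                    C \<in> carrier_mat p n \<and> D \<in> carrier_mat p m \<and>
                    Bh = iso_behavior m p n A B C D}"

text \<open>w_[t,t+N-1] = col(w t, ..., w (t+N-1)), a vector of dimension N*q.\<close>
definition window :: "nat \<Rightarrow> nat \<Rightarrow> (nat \<Rightarrow> real vec) \<Rightarrow> nat \<Rightarrow> real vec" where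
  "window q N w t = vec (N * q) (\<lambda>k. w (t + k div q) $ (k mod q))"

definition QDF :: "nat \<Rightarrow> real mat \<Rightarrow> (nat \<Rightarrow> real vec) \<Rightarrow> nat \<Rightarrow> real" where
  "QDF q P w t = (let N = dim_row P div q in scalar_prod (window q N w t) (P *\<^sub>v window q N w t))"

text \<open>nabla Psi = diag(0_q, Psi) - diag(Psi, 0_q), of size ((N+1)*q) x ((N+1)*q).\<close>
definition nabla :: "nat \<Rightarrow> real mat \<Rightarrow> real mat" where
  "nabla q P = mat (dim_row P + q) (dim_row P + q)
     (\<lambda>(i, j). (if q \<le> i \<and> q \<le> j then P $$ (i - q, j - q) else 0)
             - (if i < dim_row P \<and> j < dim_row P then P $$ (i, j) else 0))"

definition is_QDF_coeff :: "nat \<Rightarrow> real mat \<Rightarrow> bool" where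
  "is_QDF_coeff q P \<longleftrightarrow> (\<exists>N. P \<in> carrier_mat (N * q) (N * q)) \<and> sym_mat P"

definition dissipative :: "nat \<Rightarrow> (nat \<Rightarrow> real vec) set \<Rightarrow> real mat \<Rightarrow> bool" where
  "dissipative q Bh Phi \<longleftrightarrow>
     (\<exists>Psi. is_QDF_coeff q Psi \<and>
        (\<forall>w \<in> Bh. \<forall>t. 0 \<le> QDF q Psi w t) \<and>
        (\<forall>w \<in> Bh. \<forall>t. QDF q (nabla q Psi) w t \<le> QDF q Phi w t))"

end

theory Submission
  imports Defs "Jordan_Normal_Form.VS_Connect"
begin

lemma sum_split_hi: "(\<Sum>i<K+q. g i) = (\<Sum>i<q. g i) + (\<Sum>i<K. g (i+q)) " for g :: "nat \<Rightarrow> real"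
  by (induction K) (auto simp: add.commute)

lemma sum_split_lo: "(\<Sum>i<K+q. g i) = (\<Sum>i<K. g i) + (\<Sum>i<q. g (i+K)) " for g :: "nat \<Rightarrow> real"
  by (induction q) (auto simp: add.commute)

lemma quad_expand:
  assumes "P \<in> carrier_mat d d" "v \<in> carrier_vec d"
  shows "v \<bullet> (P *\<^sub>v v) = (\<Sum>i<d. \<Sum>j<d. v$i * P$$(i,j) * v$j)"
  using assms
  by (auto simp: scalar_prod_def mult_mat_vec_def row_def sum_distrib_left mult.assoc
      atLeast0LessThan intro!: sum.cong)

lemma window_idx: "i < N * q \<Longrightarrow> window q N w t $ i = w (t + i div q) $ (i mod q)"
  by (simp add: window_def)

lemma window_carrier[simp]: "window q N w t \<in> carrier_vec (N*q)"
  by (simp add: window_def)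

lemma QDF_expand:
  assumes q: "q > 0" and P: "P \<in> carrier_mat (N*q) (N*q)"
  shows "QDF q P w t = (\<Sum>i<N*q. \<Sum>j<N*q. w (t + i div q) $ (i mod q) * P$$(i,j) * w (t + j div q) $ (j mod q))"
proof -
  have N: "dim_row P div q = N" using P q by auto
  show ?thesis unfolding QDF_def Let_def N
    by (subst quad_expand[OF P window_carrier]) (simp add: window_idx)
qed

lemma nabla_carrier:
  assumes "P \<in> carrier_mat (N*q) (N*q)"
  shows "nabla q P \<in> carrier_mat (Suc N * q) (Suc N * q)"
  using assms by (auto simp: nabla_def)

lemma nabla_QDF:
  assumes q: "q > 0" and P: "P \<in> carrier_mat (N*q) (N*q)"
  shows "QDF q (nabla q P) w t = QDF q P w (Suc t) - QDF q P w t"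
proof -
  define a where "a = (\<lambda>i. w (t + i div q) $ (i mod q))"
  define K where "K = N*q"
  have aq: "a (i+q) = w (Suc t + i div q) $ (i mod q)" for i
    using q by (simp add: a_def)
  have d: "(i + q) div q = Suc (i div q)" for i using q by simp
  have KK: "Suc N * q = K + q" by (simp add: K_def)
  have "QDF q (nabla q P) w t = (\<Sum>i<K+q. \<Sum>j<K+q. a i * (nabla q P)$$(i,j) * a j)"
    using QDF_expand[OF q nabla_carrier[OF P], of w t] unfolding KK a_def by simp
  also have "\<dots> = (\<Sum>i<K+q. \<Sum>j<K+q. a i * (if q \<le> i \<and> q \<le> j then P $$ (i - q, j - q) else 0) * a j)
      - (\<Sum>i<K+q. \<Sum>j<K+q. a i * (if i < K \<and> j < K then P $$ (i, j) else 0) * a j)"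
    using P by (simp add: nabla_def K_def sum_subtractf[symmetric] algebra_simps)
  also have "(\<Sum>i<K+q. \<Sum>j<K+q. a i * (if q \<le> i \<and> q \<le> j then P $$ (i - q, j - q) else 0) * a j)
      = (\<Sum>i<K. \<Sum>j<K. a (i+q) * P $$ (i, j) * a (j+q))"
    by (simp add: sum_split_hi)
  also have "(\<Sum>i<K+q. \<Sum>j<K+q. a i * (if i < K \<and> j < K then P $$ (i, j) else 0) * a j)
      = (\<Sum>i<K. \<Sum>j<K. a i * P $$ (i, j) * a j)"
    by (simp add: sum_split_lo)
  finally show ?thesis
      using QDF_expand[OF q P, of w t] QDF_expand[OF q P, of w "Suc t"] 
      unfolding K_def a_def by (simp add: d)
qed

lemma self_scalar_zero:
  fixes v :: "real vec"
  assumes "v \<bullet> v = 0" shows "v = 0\<^sub>v (dim_vec v)"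
proof (rule eq_vecI)
  fix i assume i: "i < dim_vec (0\<^sub>v (dim_vec v))"
  have "(\<Sum>j\<in>{0..<dim_vec v}. v$j * v$j) = 0" using assms by (simp add: scalar_prod_def)
  then have "\<forall>j\<in>{0..<dim_vec v}. v$j * v$j = 0"
    by (subst sum_nonneg_eq_0_iff[symmetric]) auto
  then show "v $ i = 0\<^sub>v (dim_vec v) $ i" using i by auto
qed simp

lemma self_scalar_nonneg: "0 \<le> (v::real vec) \<bullet> v"
  by (simp add: scalar_prod_def sum_nonneg)

fun orthl :: "real vec list \<Rightarrow> bool" where
  "orthl [] = True"
| "orthl (g # gs) = (g \<bullet> g \<noteq> 0 \<and> (\<forall>x\<in>set gs. g \<bullet> x = 0) \<and> orthl gs)"

definition outer :: "nat \<Rightarrow> real vec \<Rightarrow> real mat" where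
  "outer k g = mat k k (\<lambda>(i,j). g$i * g$j)"

fun projm :: "nat \<Rightarrow> real vec list \<Rightarrow> real mat" where
  "projm k [] = 0\<^sub>m k k"
| "projm k (g # gs) = projm k gs + (1 / (g \<bullet> g)) \<cdot>\<^sub>m outer k g"

lemma zero_mat_mult_vec[simp]: "v \<in> carrier_vec k \<Longrightarrow> 0\<^sub>m k k *\<^sub>v v = (0\<^sub>v k :: real vec)"
  by (intro eq_vecI) (auto simp: scalar_prod_def)

lemma outer_dims[simp]: "dim_row (outer k g) = k" "dim_col (outer k g) = k"
  by (auto simp: outer_def)

lemma outer_carrier[simp]: "outer k g \<in> carrier_mat k k"
  by (simp add: outer_def)

lemma projm_carrier[simp]: "projm k gs \<in> carrier_mat k k"
  by (induction gs) auto

lemma outer_mult: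
  assumes g: "g \<in> carrier_vec k" and v: "v \<in> carrier_vec k"
  shows "outer k g *\<^sub>v v = (g \<bullet> v) \<cdot>\<^sub>v g"
proof (rule eq_vecI)
  fix i assume "i < dim_vec ((g \<bullet> v) \<cdot>\<^sub>v g)"
  then have i: "i < k" using g by simp
  show "(outer k g *\<^sub>v v) $ i = ((g \<bullet> v) \<cdot>\<^sub>v g) $ i"
    using i g v by (simp add: outer_def scalar_prod_def row_def sum_distrib_left sum_distrib_right
        mult.commute mult.left_commute)
qed (use g in simp)

lemma smult_mat_mult_vec:
  assumes "M \<in> carrier_mat k k" "v \<in> carrier_vec k"
  shows "(c \<cdot>\<^sub>m M) *\<^sub>v v = c \<cdot>\<^sub>v (M *\<^sub>v v)"
  using assms by (intro eq_vecI) (auto simp: scalar_prod_def sum_distrib_left mult.assoc)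

lemma projm_Cons_mult:
  assumes g: "g \<in> carrier_vec k" and v: "v \<in> carrier_vec k"
  shows "projm k (g # gs) *\<^sub>v v = projm k gs *\<^sub>v v + ((g \<bullet> v) / (g \<bullet> g)) \<cdot>\<^sub>v g"
proof -
  have "projm k (g # gs) *\<^sub>v v = projm k gs *\<^sub>v v + ((1 / (g \<bullet> g)) \<cdot>\<^sub>m outer k g) *\<^sub>v v"
    using v by (simp add: add_mult_distrib_mat_vec[of _ k k])
  also have "((1 / (g \<bullet> g)) \<cdot>\<^sub>m outer k g) *\<^sub>v v = ((g \<bullet> v) / (g \<bullet> g)) \<cdot>\<^sub>v g"
    using g v by (simp add: smult_mat_mult_vec[OF outer_carrier v] outer_mult[OF g v] smult_smult_assoc)
  finally show ?thesis .
qed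

lemma projm_mult_carrier[simp]: "v \<in> carrier_vec k \<Longrightarrow> projm k gs *\<^sub>v v \<in> carrier_vec k"
  using projm_carrier by (rule mult_mat_vec_carrier)

definition subsp :: "nat \<Rightarrow> real vec set \<Rightarrow> bool" where
  "subsp k V \<longleftrightarrow> V \<subseteq> carrier_vec k \<and> 0\<^sub>v k \<in> V \<and> (\<forall>x\<in>V. \<forall>y\<in>V. x + y \<in> V)
     \<and> (\<forall>c. \<forall>x\<in>V. c \<cdot>\<^sub>v x \<in> V)"

lemma projm_in:
  assumes V: "subsp k V" and gs: "set gs \<subseteq> V" and v: "v \<in> carrier_vec k"
  shows "projm k gs *\<^sub>v v \<in> V"
  using gs
proof (induction gs)
  case Nil
  then show ?case using V v by (simp add: subsp_def)
next
  case (Cons g gs)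
  have g: "g \<in> carrier_vec k" using Cons.prems V by (auto simp: subsp_def)
  show ?case unfolding projm_Cons_mult[OF g v]
    using Cons V by (auto simp: subsp_def)
qed

lemma projm_orth_in:
  assumes gs: "set gs \<subseteq> carrier_vec k" and v: "v \<in> carrier_vec k" and x: "x \<in> carrier_vec k"
    and o: "\<forall>g\<in>set gs. x \<bullet> g = 0"
  shows "x \<bullet> (projm k gs *\<^sub>v v) = 0"
  using gs o
proof (induction gs)
  case Nil
  then show ?case using x v by simp
next
  case (Cons g gs)
  have g: "g \<in> carrier_vec k" using Cons.prems by auto
  show ?case unfolding projm_Cons_mult[OF g v]
    using Cons g x v by (simp add: scalar_prod_add_distrib[of _ k])
qed

lemma projm_orth:
  assumes gs: "set gs \<subseteq> carrier_vec k" and v: "v \<in> carrier_vec k" and o: "orthl gs"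
  shows "\<forall>g\<in>set gs. (v - projm k gs *\<^sub>v v) \<bullet> g = 0"
  using gs o
proof (induction gs)
  case Nil
  then show ?case by simp
next
  case (Cons g gs)
  have g: "g \<in> carrier_vec k" and gs': "set gs \<subseteq> carrier_vec k" using Cons.prems by auto
  have IH: "\<forall>g\<in>set gs. (v - projm k gs *\<^sub>v v) \<bullet> g = 0" using Cons by auto
  have og: "\<forall>x\<in>set gs. g \<bullet> x = 0" and gg: "g \<bullet> g \<noteq> 0" using Cons.prems by auto
  define P where "P = projm k gs *\<^sub>v v"
  have P: "P \<in> carrier_vec k" using v by (simp add: P_def)
  have gP: "g \<bullet> P = 0" unfolding P_def by (rule projm_orth_in[OF gs' v g og])
  have e: "v - projm k (g # gs) *\<^sub>v v = (v - P) - ((g \<bullet> v) / (g \<bullet> g)) \<cdot>\<^sub>v g"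
    unfolding projm_Cons_mult[OF g v] P_def[symmetric] using v P g
    by (intro eq_vecI) auto
  show ?case
  proof
    fix x assume x: "x \<in> set (g # gs)"
    have xc: "x \<in> carrier_vec k" using x Cons.prems by auto
    have "(v - P - ((g \<bullet> v) / (g \<bullet> g)) \<cdot>\<^sub>v g) \<bullet> x = (v - P) \<bullet> x - ((g \<bullet> v) / (g \<bullet> g)) * (g \<bullet> x)"
      using v P g xc by (simp add: minus_scalar_prod_distrib[of _ k])
    also have "\<dots> = 0"
    proof (cases "x = g")
      case True
      have "(v - P) \<bullet> g = v \<bullet> g - P \<bullet> g" using v P g by (simp add: minus_scalar_prod_distrib[of _ k])
      also have "P \<bullet> g = 0" using gP comm_scalar_prod[OF g P] by simp
      finally show ?thesis using True gg comm_scalar_prod[OF g v] by simp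
    next
      case False
      then have "x \<in> set gs" using x by auto
      then show ?thesis using IH og unfolding P_def by auto
    qed
    finally show "(v - projm k (g # gs) *\<^sub>v v) \<bullet> x = 0" unfolding e .
  qed
qed

lemma orthl_distinct: "orthl gs \<Longrightarrow> distinct gs"
  by (induction gs) auto

lemma orthl_pair:
  assumes "set gs \<subseteq> carrier_vec k" "orthl gs" "x \<in> set gs" "y \<in> set gs" "x \<noteq> y"
  shows "x \<bullet> y = 0"
  using assms
proof (induction gs)
  case (Cons g gs)
  then show ?case using comm_scalar_prod[of x k y] by auto
qed simp

lemma orthl_len:
  assumes gs: "set gs \<subseteq> carrier_vec k" and o: "orthl gs"
  shows "length gs \<le> k"
proof -
  interpret vec_space "TYPE(real)" k .
  have li: "\<not> lin_dep (set gs)"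
  proof
    assume "lin_dep (set gs)"
    from this[unfolded lin_dep_def] obtain A a v where
      fin: "finite A" and A: "A \<subseteq> set gs"
      and lc: "lincomb a A = 0\<^sub>v k" and vA: "v \<in> A" and av: "a v \<noteq> 0"
      by auto
    have Ac: "A \<subseteq> carrier_vec k" using A gs by auto
    have vc: "v \<in> carrier_vec k" using vA Ac by auto
    have "lincomb a A \<bullet> v = (\<Sum>u\<in>A. (a u \<cdot>\<^sub>v u) \<bullet> v)"
      unfolding lincomb_def
      by (rule finsum_scalar_prod_sum[OF _ vc], insert Ac, auto simp: module_vec_simps)
    also have "\<dots> = (\<Sum>u\<in>A. a u * (u \<bullet> v))"
      using Ac vc by (intro sum.cong) auto
    also have "\<dots> = a v * (v \<bullet> v) + (\<Sum>u\<in>A - {v}. a u * (u \<bullet> v))"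
      using fin vA by (simp add: sum.remove)
    also have "(\<Sum>u\<in>A - {v}. a u * (u \<bullet> v)) = 0"
      using orthl_pair[OF gs o] A vA by (intro sum.neutral) auto
    finally have "a v * (v \<bullet> v) = 0" using lc vc by simp
    moreover have "\<forall>x\<in>set gs. x \<bullet> x \<noteq> 0"
      using o by (induction gs) auto
    then have "v \<bullet> v \<noteq> 0" using A vA by auto
    ultimately show False using av by simp
  qed
  have "card (set gs) \<le> dim" using li_le_dim(2)[OF fin_dim _ li] gs by simp
  then show ?thesis using dim_is_n distinct_card[OF orthl_distinct[OF o]] by simp
qed

lemma proj_exists:
  assumes V: "subsp k V"
  shows "\<exists>M \<in> carrier_mat k k. (\<forall>v\<in>carrier_vec k. M *\<^sub>v v \<in> V) \<and> (\<forall>v\<in>V. M *\<^sub>v v = v)"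
proof -
  have Vc: "V \<subseteq> carrier_vec k" using V by (simp add: subsp_def)
  define Pr where "Pr = (\<lambda>gs. set gs \<subseteq> V \<and> orthl gs)"
  have "Pr []" by (simp add: Pr_def)
  moreover have "\<forall>gs. Pr gs \<longrightarrow> length gs < Suc k"
    using orthl_len Vc by (auto simp: Pr_def le_imp_less_Suc)
  ultimately obtain gs where gs: "Pr gs" and mx: "\<forall>hs. Pr hs \<longrightarrow> length hs \<le> length gs"
    using ex_has_greatest_nat[of Pr "[]" length "Suc k"] by blast
  have gsV: "set gs \<subseteq> V" and o: "orthl gs" using gs by (auto simp: Pr_def)
  have gsc: "set gs \<subseteq> carrier_vec k" using gsV Vc by auto
  show ?thesis
  proof (intro bexI conjI ballI)
    show "projm k gs *\<^sub>v v \<in> V" if "v \<in> carrier_vec k" for v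
      using projm_in[OF V gsV that] .
    show "projm k gs *\<^sub>v v = v" if vV: "v \<in> V" for v
    proof (rule ccontr)
      assume ne: "projm k gs *\<^sub>v v \<noteq> v"
      have vc: "v \<in> carrier_vec k" using vV Vc by auto
      define h where "h = v - projm k gs *\<^sub>v v"
      have hc: "h \<in> carrier_vec k" using vc by (simp add: h_def)
      have "h = v + (-1) \<cdot>\<^sub>v (projm k gs *\<^sub>v v)"
        unfolding h_def using vc by (intro eq_vecI) auto
      then have hV: "h \<in> V" using V vV projm_in[OF V gsV vc] by (simp add: subsp_def)
      have hne: "h \<bullet> h \<noteq> 0"
      proof
        assume "h \<bullet> h = 0"
        then have "h = 0\<^sub>v k" using self_scalar_zero hc by fastforce
        then have "v = projm k gs *\<^sub>v v" unfolding h_def using vc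
          by (metis minus_equation_iff vec_eq_iff dim_vec carrier_vecD projm_mult_carrier
              index_minus_vec(1) index_zero_vec(1) eq_vecI right_minus_eq)
        then show False using ne by simp
      qed
      have ho: "\<forall>x\<in>set gs. h \<bullet> x = 0" using projm_orth[OF gsc vc o] unfolding h_def .
      have "Pr (h # gs)" using hV gsV o hne ho by (simp add: Pr_def)
      then show False using mx by fastforce
    qed
  qed simp
qed

lemma vec_first_add: "a \<in> carrier_vec (m+p) \<Longrightarrow> b \<in> carrier_vec (m+p) \<Longrightarrow>
    vec_first (a + b) m = vec_first a m + vec_first b m"
  by (intro eq_vecI) (auto simp: vec_first_def)

lemma vec_last_add: "a \<in> carrier_vec (m+p) \<Longrightarrow> b \<in> carrier_vec (m+p) \<Longrightarrow>
    vec_last (a + b) p = vec_last a p + vec_last b p"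
  by (intro eq_vecI) (auto simp: vec_last_def)

lemma vec_first_smult: "vec_first (c \<cdot>\<^sub>v a) m = c \<cdot>\<^sub>v vec_first a m" if "a \<in> carrier_vec (m+p)"
  using that by (intro eq_vecI) (auto simp: vec_first_def)

lemma vec_last_smult: "vec_last (c \<cdot>\<^sub>v a) p = c \<cdot>\<^sub>v vec_last a p" if "a \<in> carrier_vec (m+p)"
  using that by (intro eq_vecI) (auto simp: vec_last_def)

locale sysmats =
  fixes m p n :: nat and A B C D :: "real mat"
  assumes A: "A \<in> carrier_mat n n" and B: "B \<in> carrier_mat n m"
    and C: "C \<in> carrier_mat p n" and D: "D \<in> carrier_mat p m"
begin

abbreviation "Bh \<equiv> iso_behavior m p n A B C D"

lemma behav_add:
  assumes w1: "w1 \<in> Bh" and w2: "w2 \<in> Bh"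
  shows "(\<lambda>t. w1 t + w2 t) \<in> Bh"
proof -
  obtain x1 where c1: "\<forall>t. w1 t \<in> carrier_vec (m+p)" and x1: "\<forall>t. x1 t \<in> carrier_vec n \<and>
              x1 (Suc t) = A *\<^sub>v x1 t + B *\<^sub>v vec_first (w1 t) m \<and>
              vec_last (w1 t) p = C *\<^sub>v x1 t + D *\<^sub>v vec_first (w1 t) m"
    using w1 by (auto simp: iso_behavior_def)
  obtain x2 where c2: "\<forall>t. w2 t \<in> carrier_vec (m+p)" and x2: "\<forall>t. x2 t \<in> carrier_vec n \<and>
              x2 (Suc t) = A *\<^sub>v x2 t + B *\<^sub>v vec_first (w2 t) m \<and>
              vec_last (w2 t) p = C *\<^sub>v x2 t + D *\<^sub>v vec_first (w2 t) m"
    using w2 by (auto simp: iso_behavior_def)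
  show ?thesis unfolding iso_behavior_def
  proof (intro CollectI conjI exI[of _ "\<lambda>t. x1 t + x2 t"] allI)
    fix t
    have a: "w1 t \<in> carrier_vec (m+p)" "w2 t \<in> carrier_vec (m+p)" using c1 c2 by auto
    have b: "x1 t \<in> carrier_vec n" "x2 t \<in> carrier_vec n" using x1 x2 by auto
    show "w1 t + w2 t \<in> carrier_vec (m + p)" using a by simp
    show "x1 t + x2 t \<in> carrier_vec n" using b by simp
    show "x1 (Suc t) + x2 (Suc t) = A *\<^sub>v (x1 t + x2 t) + B *\<^sub>v vec_first (w1 t + w2 t) m"
      using x1 x2 a b A B unfolding vec_first_add[OF a]
      by (simp add: mult_add_distrib_mat_vec[of _ n n] mult_add_distrib_mat_vec[of _ n m])
        (smt (verit) assoc_add_vec comm_add_vec add_carrier_vec mult_mat_vec_carrier vec_first_carrier)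
    show "vec_last (w1 t + w2 t) p = C *\<^sub>v (x1 t + x2 t) + D *\<^sub>v vec_first (w1 t + w2 t) m"
      using x1 x2 a b C D unfolding vec_first_add[OF a] vec_last_add[OF a]
      by (simp add: mult_add_distrib_mat_vec[of _ p n] mult_add_distrib_mat_vec[of _ p m])
        (smt (verit) assoc_add_vec comm_add_vec add_carrier_vec mult_mat_vec_carrier vec_first_carrier)
  qed
qed

lemma behav_smult:
  assumes w1: "w1 \<in> Bh"
  shows "(\<lambda>t. c \<cdot>\<^sub>v w1 t) \<in> Bh"
proof -
  obtain x1 where c1: "\<forall>t. w1 t \<in> carrier_vec (m+p)" and x1: "\<forall>t. x1 t \<in> carrier_vec n \<and>
              x1 (Suc t) = A *\<^sub>v x1 t + B *\<^sub>v vec_first (w1 t) m \<and>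
              vec_last (w1 t) p = C *\<^sub>v x1 t + D *\<^sub>v vec_first (w1 t) m"
    using w1 by (auto simp: iso_behavior_def)
  show ?thesis unfolding iso_behavior_def
  proof (intro CollectI conjI exI[of _ "\<lambda>t. c \<cdot>\<^sub>v x1 t"] allI)
    fix t
    have a: "w1 t \<in> carrier_vec (m+p)" using c1 by auto
    have b: "x1 t \<in> carrier_vec n" using x1 by auto
    show "c \<cdot>\<^sub>v w1 t \<in> carrier_vec (m + p)" using a by simp
    show "c \<cdot>\<^sub>v x1 t \<in> carrier_vec n" using b by simp
    show "c \<cdot>\<^sub>v x1 (Suc t) = A *\<^sub>v (c \<cdot>\<^sub>v x1 t) + B *\<^sub>v vec_first (c \<cdot>\<^sub>v w1 t) m"
      using x1 a b A B unfolding vec_first_smult[OF a]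
      by (simp add: mult_mat_vec[of _ n n] mult_mat_vec[of _ n m] smult_add_distrib_vec[of _ n])
    show "vec_last (c \<cdot>\<^sub>v w1 t) p = C *\<^sub>v (c \<cdot>\<^sub>v x1 t) + D *\<^sub>v vec_first (c \<cdot>\<^sub>v w1 t) m"
      using x1 a b C D unfolding vec_first_smult[OF a] vec_last_smult[OF a]
      by (simp add: mult_mat_vec[of _ p n] mult_mat_vec[of _ p m] smult_add_distrib_vec[of _ p])
  qed
qed

lemma mat_zero_vec: "M \<in> carrier_mat r c \<Longrightarrow> M *\<^sub>v 0\<^sub>v c = (0\<^sub>v r :: real vec)"
  by (intro eq_vecI) (auto simp: scalar_prod_def)

lemma behav_zero: "(\<lambda>t. 0\<^sub>v (m+p)) \<in> Bh"
  unfolding iso_behavior_def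
proof (intro CollectI conjI exI[of _ "\<lambda>t. 0\<^sub>v n"] allI)
  fix t :: nat
  have f: "vec_first (0\<^sub>v (m+p)) m = 0\<^sub>v m" "vec_last (0\<^sub>v (m+p)) p = 0\<^sub>v p"
    by (auto simp: vec_first_def vec_last_def)
  show "0\<^sub>v n = A *\<^sub>v 0\<^sub>v n + B *\<^sub>v vec_first (0\<^sub>v (m + p)) m"
    unfolding f using A B by (simp add: mat_zero_vec)
  show "vec_last (0\<^sub>v (m + p)) p = C *\<^sub>v 0\<^sub>v n + D *\<^sub>v vec_first (0\<^sub>v (m + p)) m"
    unfolding f using C D by (simp add: mat_zero_vec)
qed auto

lemma behav_shift:
  assumes w1: "w1 \<in> Bh"
  shows "(\<lambda>s. w1 (s + t)) \<in> Bh"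
proof -
  obtain x1 where c1: "\<forall>t. w1 t \<in> carrier_vec (m+p)" and x1: "\<forall>t. x1 t \<in> carrier_vec n \<and>
              x1 (Suc t) = A *\<^sub>v x1 t + B *\<^sub>v vec_first (w1 t) m \<and>
              vec_last (w1 t) p = C *\<^sub>v x1 t + D *\<^sub>v vec_first (w1 t) m"
    using w1 by (auto simp: iso_behavior_def)
  show ?thesis unfolding iso_behavior_def
    by (intro CollectI conjI exI[of _ "\<lambda>s. x1 (s + t)"] allI) (use c1 x1 in auto)
qed

end


lemma window_add:
  assumes q: "q > 0" and c: "\<forall>t. w1 t \<in> carrier_vec q" "\<forall>t. w2 t \<in> carrier_vec q"
  shows "window q N (\<lambda>t. w1 t + w2 t) s = window q N w1 s + window q N w2 s"
proof -
  have d: "dim_vec (w1 t) = q" "dim_vec (w2 t) = q" for t using c by auto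
  show ?thesis using q by (intro eq_vecI) (auto simp: window_def d)
qed

lemma window_smult:
  assumes q: "q > 0" and c: "\<forall>t. w1 t \<in> carrier_vec q"
  shows "window q N (\<lambda>t. a \<cdot>\<^sub>v w1 t) s = a \<cdot>\<^sub>v window q N w1 s"
proof -
  have d: "dim_vec (w1 t) = q" for t using c by auto
  show ?thesis using q by (intro eq_vecI) (auto simp: window_def d)
qed

lemma window_zero:
  assumes q: "q > 0"
  shows "window q N (\<lambda>t. 0\<^sub>v q) s = (0\<^sub>v (N*q) :: real vec)"
  using q by (intro eq_vecI) (auto simp: window_def)

lemma window_shift: "window q N w t = window q N (\<lambda>s. w (s + t)) 0"
  by (intro eq_vecI) (auto simp: window_def add.commute)

lemma transpose_scalar:
  fixes M :: "real mat"
  assumes M: "M \<in> carrier_mat r c" and v: "v \<in> carrier_vec c" and y: "y \<in> carrier_vec r"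
  shows "v \<bullet> (transpose_mat M *\<^sub>v y) = (M *\<^sub>v v) \<bullet> y"
proof -
  have "v \<bullet> (transpose_mat M *\<^sub>v y) = (\<Sum>i<c. \<Sum>j<r. v$i * M$$(j,i) * y$j)"
    using M v y by (simp add: scalar_prod_def mult_mat_vec_def sum_distrib_left atLeast0LessThan
        mult.assoc mult.left_commute col_def row_def)
  also have "\<dots> = (\<Sum>j<r. \<Sum>i<c. v$i * M$$(j,i) * y$j)" by (rule sum.swap)
  also have "\<dots> = (M *\<^sub>v v) \<bullet> y"
    using M v y by (simp add: scalar_prod_def mult_mat_vec_def sum_distrib_right sum_distrib_left atLeast0LessThan
        mult_ac row_def)
  finally show ?thesis .
qed

theorem lemma1:
  fixes m p :: nat and Bh :: "(nat \<Rightarrow> real vec) set" and Phi :: "real mat"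
  assumes "1 \<le> m" and "1 \<le> p"
    and "Bh \<in> L_mp m p"
    and "is_QDF_coeff (m + p) Phi"
  shows "dissipative (m + p) Bh Phi \<longleftrightarrow>
         (\<exists>Psi. is_QDF_coeff (m + p) Psi \<and> psd_mat Psi \<and>
            (\<forall>w \<in> Bh. \<forall>t. QDF (m + p) (nabla (m + p) Psi) w t \<le> QDF (m + p) Phi w t))"
proof -
  define q where "q = m + p"
  have q: "q > 0" using assms(1) by (simp add: q_def)
  obtain n A B C D where A: "A \<in> carrier_mat n n" and B: "B \<in> carrier_mat n m"
    and C: "C \<in> carrier_mat p n" and D: "D \<in> carrier_mat p m"
    and Bh: "Bh = iso_behavior m p n A B C D"
    using assms(3) by (auto simp: L_mp_def)
  interpret sysmats m p n A B C D using A B C D by unfold_locales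
  have wc: "\<forall>t. w t \<in> carrier_vec q" if "w \<in> Bh" for w
    using that by (simp add: Bh iso_behavior_def q_def)
  have QDF_win: "QDF q P w t = window q N w t \<bullet> (P *\<^sub>v window q N w t)"
    if "P \<in> carrier_mat (N*q) (N*q)" for P N w t
    using that q by (simp add: QDF_def)
  show ?thesis unfolding q_def[symmetric]
  proof
    assume "dissipative q Bh Phi"
    then obtain Psi N where PsiC: "Psi \<in> carrier_mat (N*q) (N*q)" and sym: "sym_mat Psi"
      and nn: "\<forall>w\<in>Bh. \<forall>t. 0 \<le> QDF q Psi w t"
      and nab: "\<forall>w\<in>Bh. \<forall>t. QDF q (nabla q Psi) w t \<le> QDF q Phi w t"
      by (auto simp: dissipative_def is_QDF_coeff_def)
    define V where "V = {window q N w 0 | w. w \<in> Bh}"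
    have V: "subsp (N*q) V"
      unfolding subsp_def
    proof (intro conjI ballI allI)
      show "V \<subseteq> carrier_vec (N*q)" by (auto simp: V_def)
      show "0\<^sub>v (N*q) \<in> V" unfolding V_def
        using behav_zero window_zero[OF q, of N 0] by (auto simp: Bh q_def intro!: exI[of _ "\<lambda>t. 0\<^sub>v (m+p)"])
      show "x + y \<in> V" if xyV: "x \<in> V" "y \<in> V" for x y
      proof -
        obtain w1 w2 where "w1 \<in> Bh" "w2 \<in> Bh" "x = window q N w1 0" "y = window q N w2 0"
          using xyV unfolding V_def by blast
        then show ?thesis
        proof -
          assume h: "w1 \<in> Bh" "w2 \<in> Bh" "x = window q N w1 0" "y = window q N w2 0"
          have "x + y = window q N (\<lambda>t. w1 t + w2 t) 0"
            using window_add[OF q wc[OF h(1)] wc[OF h(2)], of N 0] h(3,4) by simp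
          moreover have "(\<lambda>t. w1 t + w2 t) \<in> Bh" using behav_add[of w1 w2] h Bh by simp
          ultimately show ?thesis unfolding V_def by blast
        qed
      qed
      show "c \<cdot>\<^sub>v x \<in> V" if xV: "x \<in> V" for x c
      proof -
        obtain w1 where "w1 \<in> Bh" "x = window q N w1 0"
          using xV unfolding V_def by blast
        then show ?thesis
        proof -
          assume h: "w1 \<in> Bh" "x = window q N w1 0"
          have "c \<cdot>\<^sub>v x = window q N (\<lambda>t. c \<cdot>\<^sub>v w1 t) 0"
            using window_smult[OF q wc[OF h(1)], of N c 0] h(2) by simp
          moreover have "(\<lambda>t. c \<cdot>\<^sub>v w1 t) \<in> Bh" using behav_smult[of w1 c] h Bh by simp
          ultimately show ?thesis unfolding V_def by blast
        qed
      qed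
    qed
    have winV: "window q N w t \<in> V" if "w \<in> Bh" for w t
    proof -
      have "(\<lambda>s. w (s + t)) \<in> Bh" using behav_shift[of w t] that Bh by simp
      then show ?thesis unfolding window_shift[of q N w t] V_def by blast
    qed
    obtain M where MC: "M \<in> carrier_mat (N*q) (N*q)" and MV: "\<forall>v\<in>carrier_vec (N*q). M *\<^sub>v v \<in> V"
      and Mid: "\<forall>v\<in>V. M *\<^sub>v v = v"
      using proj_exists[OF V] by blast
    define Psi' where "Psi' = transpose_mat M * Psi * M"
    have P'C: "Psi' \<in> carrier_mat (N*q) (N*q)" using MC PsiC by (simp add: Psi'_def)
    have key: "v \<bullet> (Psi' *\<^sub>v v) = (M *\<^sub>v v) \<bullet> (Psi *\<^sub>v (M *\<^sub>v v))" if v: "v \<in> carrier_vec (N*q)" for v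
    proof -
      have "Psi' *\<^sub>v v = transpose_mat M *\<^sub>v (Psi *\<^sub>v (M *\<^sub>v v))"
      proof -
        have T: "transpose_mat M \<in> carrier_mat (N*q) (N*q)" using MC by simp
        have TP: "transpose_mat M * Psi \<in> carrier_mat (N*q) (N*q)" using T PsiC by simp
        have Mv: "M *\<^sub>v v \<in> carrier_vec (N*q)" using MC v by simp
        show ?thesis unfolding Psi'_def
          using assoc_mult_mat_vec[OF TP MC v] assoc_mult_mat_vec[OF T PsiC Mv] by simp
      qed
      then show ?thesis using transpose_scalar[OF MC v] MC PsiC v by simp
    qed
    have same: "QDF q Psi' w t = QDF q Psi w t" if "w \<in> Bh" for w t
      unfolding QDF_win[OF P'C] QDF_win[OF PsiC] key[OF window_carrier] Mid[rule_format, OF winV[OF that]] ..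
    show "\<exists>Psi. is_QDF_coeff q Psi \<and> psd_mat Psi \<and> (\<forall>w\<in>Bh. \<forall>t. QDF q (nabla q Psi) w t \<le> QDF q Phi w t)"
    proof (intro exI conjI ballI allI)
      show "is_QDF_coeff q Psi'"
        unfolding is_QDF_coeff_def sym_mat_def
      proof (intro conjI exI)
        show "Psi' \<in> carrier_mat (N*q) (N*q)" by (rule P'C)
        have T: "transpose_mat M \<in> carrier_mat (N*q) (N*q)" using MC by simp
        have TP: "transpose_mat M * Psi \<in> carrier_mat (N*q) (N*q)" using T PsiC by simp
        have PsiT: "transpose_mat Psi = Psi" using sym by (simp add: sym_mat_def)
        have "transpose_mat Psi' = transpose_mat M * transpose_mat (transpose_mat M * Psi)"
          unfolding Psi'_def by (rule transpose_mult[OF TP MC])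
        also have "transpose_mat (transpose_mat M * Psi) = Psi * M"
          using transpose_mult[OF T PsiC] PsiT by simp
        also have "transpose_mat M * (Psi * M) = Psi'"
          unfolding Psi'_def using assoc_mult_mat[OF T PsiC MC] by simp
        finally show "transpose_mat Psi' = Psi'" .
      qed
      show "psd_mat Psi'" unfolding psd_mat_def
      proof
        fix v :: "real vec" assume "v \<in> carrier_vec (dim_row Psi')"
        then have v: "v \<in> carrier_vec (N*q)" using P'C by simp
        obtain w where w: "w \<in> Bh" and e: "M *\<^sub>v v = window q N w 0" using MV v by (auto simp: V_def)
        show "0 \<le> v \<bullet> (Psi' *\<^sub>v v)" unfolding key[OF v] e
          using nn w QDF_win[OF PsiC, of w 0] by (metis)
      qed
      fix w t assume w: "w \<in> Bh"
      have "QDF q (nabla q Psi') w t = QDF q (nabla q Psi) w t"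
        unfolding nabla_QDF[OF q P'C] nabla_QDF[OF q PsiC] same[OF w] ..
      then show "QDF q (nabla q Psi') w t \<le> QDF q Phi w t" using nab w by simp
    qed
  next
    assume "\<exists>Psi. is_QDF_coeff q Psi \<and> psd_mat Psi \<and> (\<forall>w\<in>Bh. \<forall>t. QDF q (nabla q Psi) w t \<le> QDF q Phi w t)"
    then obtain Psi N where PsiC: "Psi \<in> carrier_mat (N*q) (N*q)" and sym: "sym_mat Psi"
      and psd: "psd_mat Psi"
      and nab: "\<forall>w\<in>Bh. \<forall>t. QDF q (nabla q Psi) w t \<le> QDF q Phi w t"
      by (auto simp: is_QDF_coeff_def)
    show "dissipative q Bh Phi" unfolding dissipative_def
    proof (intro exI conjI ballI allI)
      show "is_QDF_coeff q Psi" using PsiC sym by (auto simp: is_QDF_coeff_def)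
      show "0 \<le> QDF q Psi w t" for w t
        unfolding QDF_win[OF PsiC] using psd PsiC window_carrier[of q N w t]
        by (simp add: psd_mat_def)
      show "QDF q (nabla q Psi) w t \<le> QDF q Phi w t" if "w \<in> Bh" for w t using nab that by simp
    qed
  qed
qed

end
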